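(* Let $A$ be a simple type. For every partial surjection $f \colon Q \twoheadrightarrow Q'$ between finite sets one has $\mathrm{Reg}_{Q'}(A) \subseteq \mathrm{Reg}_{Q}(A)$. The resulting diagram of Boolean algebras $\mathrm{Reg}_{(-)}(A) \colon \mathbf{FinPSurj}^{\mathrm{op}} \to \mathbf{BA}$, sending $Q$ to $\mathrm{Reg}_Q(A)$ and a partial surjection $f \colon Q \twoheadrightarrow Q'$ to the inclusion $\mathrm{Reg}_{Q'}(A) \hookrightarrow \mathrm{Reg}_Q(A)$, is directed, and its colimit in the category $\mathbf{BA}$ of Boolean algebras is the Boolean algebra $\mathrm{Reg}(A)$ (in particular $\mathrm{Reg}(A)$ is a Boolean subalgebra of $\wp(\Lambda(A))$).
   Context: Simple types are generated from a base type $o$ by $A \Rightarrow B$. $\Lambda(A)$ denotes the set of closed simply typed $\lambda$-terms of type $A$ modulo $\beta\eta$-conversion. For a finite set $Q$, define $[\![o]\!]_Q = Q$ and $[\![A \Rightarrow B]\!]_Q$ = the set of all functions $[\![A]\!]_Q \to [\![B]\!]_Q$; each $M \in \Lambda(A)$ has its standard interpretation $[\![M]\!]_Q \in [\![A]\!]_Q$ in this finite set-theoretic model. $\mathrm{Reg}_Q(A) = \{\{M \in \Lambda(A) : [\![M]\!]_Q \in F\} : F \subseteq [\![A]\!]_Q\}$ (a Boolean subalgebra of $\wp(\Lambda(A))$), and $\mathrm{Reg}(A) = \bigcup_{Q \text{ finite}} \mathrm{Reg}_Q(A)$. A partial surjection $f \colon Q \twoheadrightarrow Q'$ is a relation $f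 \subseteq Q \times Q'$ that is the graph of a partial function which is surjective onto $Q'$. $\mathbf{FinPSurj}$ is the category of finite sets and partial surjections. *)

theory Defs
  imports Main "HOL-Library.FSet"
begin

datatype ty = Bo | Arr ty ty

datatype tm = Var nat | App tm tm | Lam ty tm

inductive has_ty :: "ty list \<Rightarrow> tm \<Rightarrow> ty \<Rightarrow> bool" where
  has_ty_Var: "i < length G \<Longrightarrow> has_ty G (Var i) (G ! i)"
| has_ty_App: "has_ty G s (Arr T U) \<Longrightarrow> has_ty G t T \<Longrightarrow> has_ty G (App s t) U"
| has_ty_Lam: "has_ty (T # G) t U \<Longrightarrow> has_ty G (Lam T t) (Arr T U)"

primrec lift :: "nat \<Rightarrow> tm \<Rightarrow> tm" where
  "lift k (Var i) = (if i < k then Var i else Var (Suc i))"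
| "lift k (App s t) = App (lift k s) (lift k t)"
| "lift k (Lam T t) = Lam T (lift (Suc k) t)"

primrec subst :: "tm \<Rightarrow> nat \<Rightarrow> tm \<Rightarrow> tm" where
  "subst (Var i) k u = (if i < k then Var i else if i = k then u else Var (i - 1))"
| "subst (App s t) k u = App (subst s k u) (subst t k u)"
| "subst (Lam T t) k u = Lam T (subst t (Suc k) (lift 0 u))"

inductive step :: "tm \<Rightarrow> tm \<Rightarrow> bool" where
  beta: "step (App (Lam T s) t) (subst s 0 t)"
| eta: "step (Lam T (App (lift 0 t) (Var 0))) t"
| appL: "step s s' \<Longrightarrow> step (App s t) (App s' t)"
| appR: "step t t' \<Longrightarrow> step (App s t) (App s t')"
| lam: "step t t' \<Longrightarrow> step (Lam T t) (Lam T t')"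

definition LamRaw :: "ty \<Rightarrow> tm set" where
  "LamRaw A = {t. has_ty [] t A}"

definition stepA :: "ty \<Rightarrow> (tm \<times> tm) set" where
  "stepA A = {(s, t). s \<in> LamRaw A \<and> t \<in> LamRaw A \<and> step s t}"

definition conv :: "ty \<Rightarrow> (tm \<times> tm) set" where
  "conv A = (stepA A \<union> (stepA A)\<inverse>)\<^sup>* \<inter> (LamRaw A \<times> LamRaw A)"

text \<open>\<Lambda>(A): closed terms of type A modulo beta-eta conversion.\<close>
definition Terms :: "ty \<Rightarrow> tm set set" where
  "Terms A = LamRaw A // conv A"

datatype 'q sv = Base 'q | Fn "('q sv \<times> 'q sv) fset"

primrec dom :: "'q set \<Rightarrow> ty \<Rightarrow> 'q sv set" where
  "dom Q Bo = Base ` Q"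
| "dom Q (Arr A B) = {Fn G | G. fset G \<subseteq> dom Q A \<times> dom Q B \<and>
                                  (\<forall>x \<in> dom Q A. \<exists>!y. (x, y) |\<in>| G)}"

fun app :: "'q sv \<Rightarrow> 'q sv \<Rightarrow> 'q sv" where
  "app (Fn G) x = (THE y. (x, y) |\<in>| G)"
| "app (Base q) x = undefined"

primrec sem :: "'q set \<Rightarrow> tm \<Rightarrow> 'q sv list \<Rightarrow> 'q sv" where
  "sem Q (Var i) e = e ! i"
| "sem Q (App s t) e = app (sem Q s e) (sem Q t e)"
| "sem Q (Lam T t) e = Fn (Abs_fset ((\<lambda>x. (x, sem Q t (x # e))) ` dom Q T))"

definition interp :: "'q set \<Rightarrow> tm set \<Rightarrow> 'q sv" where
  "interp Q C = sem Q (SOME t. t \<in> C) []"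

definition RegQ :: "'q set \<Rightarrow> ty \<Rightarrow> tm set set set" where
  "RegQ Q A = {{C \<in> Terms A. interp Q C \<in> F} | F. F \<subseteq> dom Q A}"

text \<open>Reg(A): union over all finite Q (finite sets represented as finite sets of naturals).\<close>
definition Reg :: "ty \<Rightarrow> tm set set set" where
  "Reg A = \<Union> {RegQ (Q :: nat set) A | Q. finite Q}"

definition psurj :: "'a set \<Rightarrow> 'b set \<Rightarrow> ('a \<times> 'b) set \<Rightarrow> bool" where
  "psurj Q Q' f \<longleftrightarrow> f \<subseteq> Q \<times> Q' \<and> single_valued f \<and> Range f = Q'"

definition bool_subalg :: "'x set \<Rightarrow> 'x set set \<Rightarrow> bool" where
  "bool_subalg U S \<longleftrightarrow> S \<subseteq> Pow U \<and> {} \<in> S \<and> (\<forall>X \<in> S. U - X \<in> S)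
      \<and> (\<forall>X \<in> S. \<forall>Y \<in> S. X \<union> Y \<in> S)"

definition ba_hom_on :: "'x set \<Rightarrow> 'x set set \<Rightarrow> ('x set \<Rightarrow> 'c::boolean_algebra) \<Rightarrow> bool" where
  "ba_hom_on U S h \<longleftrightarrow> h {} = bot \<and> h U = top \<and> (\<forall>X \<in> S. h (U - X) = - h X)
      \<and> (\<forall>X \<in> S. \<forall>Y \<in> S. h (X \<union> Y) = sup (h X) (h Y) \<and> h (X \<inter> Y) = inf (h X) (h Y))"

end

theory Submission
  imports Defs
begin


lemma fin_dom: "finite Q \<Longrightarrow> finite (dom Q A)"
proof (induction A)
  case Bo then show ?case by simp
next
  case (Arr A B)
  have "dom Q (Arr A B) \<subseteq> Fn ` Abs_fset ` Pow (dom Q A \<times> dom Q B)"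
  proof
    fix z assume "z \<in> dom Q (Arr A B)"
    then obtain G where z: "z = Fn G" "fset G \<subseteq> dom Q A \<times> dom Q B" by auto
    then show "z \<in> Fn ` Abs_fset ` Pow (dom Q A \<times> dom Q B)"
      by (metis Pow_iff fset_inverse image_eqI)
  qed
  moreover have "finite (Fn ` Abs_fset ` Pow (dom Q A \<times> dom Q B))"
    using Arr by auto
  ultimately show ?case by (rule finite_subset)
qed

lemma app_dom:
  assumes "phi \<in> dom Q (Arr A B)" "x \<in> dom Q A"
  shows "app phi x \<in> dom Q B \<and> (x, app phi x) \<in> fset (case phi of Fn G \<Rightarrow> G)"
proof -
  from assms obtain G where G: "phi = Fn G" "fset G \<subseteq> dom Q A \<times> dom Q B"
    "\<forall>x \<in> dom Q A. \<exists>!y. (x, y) |\<in>| G" by auto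
  then have ex: "\<exists>!y. (x, y) |\<in>| G" using assms by auto
  have "(x, THE y. (x, y) |\<in>| G) |\<in>| G" using theI'[OF ex] .
  then show ?thesis using G by auto
qed

lemma app_ext:
  assumes "phi \<in> dom Q (Arr A B)" "psi \<in> dom Q (Arr A B)"
    "\<forall>x \<in> dom Q A. app phi x = app psi x"
  shows "phi = psi"
proof -
  from assms(1) obtain G1 where G1: "phi = Fn G1" "fset G1 \<subseteq> dom Q A \<times> dom Q B"
    "\<forall>x \<in> dom Q A. \<exists>!y. (x, y) |\<in>| G1" by auto
  from assms(2) obtain G2 where G2: "psi = Fn G2" "fset G2 \<subseteq> dom Q A \<times> dom Q B"
    "\<forall>x \<in> dom Q A. \<exists>!y. (x, y) |\<in>| G2" by auto
  have "fset G1 = fset G2"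
  proof (intro set_eqI iffI)
    fix p assume p: "p \<in> fset G1"
    obtain x y where xy: "p = (x, y)" by fastforce
    have x: "x \<in> dom Q A" using p xy G1 by auto
    have "y = app phi x" using app_dom[OF assms(1) x] G1 p xy x by auto
    also have "\<dots> = app psi x" using assms(3) x by auto
    finally show "p \<in> fset G2" using app_dom[OF assms(2) x] G2 xy by auto
  next
    fix p assume p: "p \<in> fset G2"
    obtain x y where xy: "p = (x, y)" by fastforce
    have x: "x \<in> dom Q A" using p xy G2 by auto
    have "y = app psi x" using app_dom[OF assms(2) x] G2 p xy x by auto
    also have "\<dots> = app phi x" using assms(3) x by auto
    finally show "p \<in> fset G1" using app_dom[OF assms(1) x] G1 xy by auto
  qed
  then show ?thesis using G1 G2 by (simp add: fset_inject)
qed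

lemma mk_fun:
  assumes "finite Q" "\<forall>x \<in> dom Q A. g x \<in> dom Q B"
  shows "Fn (Abs_fset ((\<lambda>x. (x, g x)) ` dom Q A)) \<in> dom Q (Arr A B)
     \<and> (\<forall>x \<in> dom Q A. app (Fn (Abs_fset ((\<lambda>x. (x, g x)) ` dom Q A))) x = g x)"
proof -
  have fs: "fset (Abs_fset ((\<lambda>x. (x, g x)) ` dom Q A)) = (\<lambda>x. (x, g x)) ` dom Q A"
    using fin_dom[OF assms(1)] by (simp add: Abs_fset_inverse)
  show ?thesis using assms(2) by (auto simp: fs)
qed

fun emp :: "ty \<Rightarrow> bool" where
  "emp Bo = True"
| "emp (Arr A B) = (\<not> emp A \<and> emp B)"

lemma dom_empty: "finite Q \<Longrightarrow> (dom Q A = {}) = (Q = {} \<and> emp A)"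
proof (induction A)
  case Bo then show ?case by simp
next
  case (Arr A B)
  have "(dom Q (Arr A B) = {}) = (dom Q A \<noteq> {} \<and> dom Q B = {})"
  proof
    assume e: "dom Q (Arr A B) = {}"
    show "dom Q A \<noteq> {} \<and> dom Q B = {}"
    proof (rule ccontr)
      assume "\<not> (dom Q A \<noteq> {} \<and> dom Q B = {})"
      then have "\<exists>g. \<forall>x \<in> dom Q A. g x \<in> dom Q B"
      proof (cases "dom Q A = {}")
        case True then show ?thesis by simp
      next
        case False
        then obtain b where "b \<in> dom Q B" using \<open>\<not> (dom Q A \<noteq> {} \<and> dom Q B = {})\<close> by blast
        then show ?thesis by (intro exI[of _ "\<lambda>_. b"]) simp
      qed
      then obtain g where "\<forall>x \<in> dom Q A. g x \<in> dom Q B" by blast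
      from mk_fun[OF Arr.prems this] have "Fn (Abs_fset ((\<lambda>x. (x, g x)) ` dom Q A)) \<in> dom Q (Arr A B)" by blast
      with e show False by blast
    qed
  next
    assume "dom Q A \<noteq> {} \<and> dom Q B = {}"
    then show "dom Q (Arr A B) = {}" by fastforce
  qed
  then show ?case using Arr by auto
qed

lemma sem_dom:
  assumes "has_ty G t T" "finite Q"
  shows "\<And>e. (\<forall>i < length G. e ! i \<in> dom Q (G ! i)) \<Longrightarrow> sem Q t e \<in> dom Q T"
  using assms(1)
proof (induction arbitrary: rule: has_ty.induct)
  case (has_ty_Var i G) then show ?case by simp
next
  case (has_ty_App G s T U t)
  then show ?case using app_dom by (metis sem.simps(2))
next
  case (has_ty_Lam T G t U)
  have "\<forall>x \<in> dom Q T. sem Q t (x # e) \<in> dom Q U"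
  proof
    fix x assume "x \<in> dom Q T"
    then have "\<forall>i < length (T # G). (x # e) ! i \<in> dom Q ((T # G) ! i)"
      using has_ty_Lam.prems by (auto simp: nth_Cons split: nat.split)
    then show "sem Q t (x # e) \<in> dom Q U" using has_ty_Lam.IH by blast
  qed
  then show ?case using mk_fun[OF assms(2)] by simp
qed



primrec LR :: "('a \<times> 'b) set \<Rightarrow> 'a set \<Rightarrow> 'b set \<Rightarrow> ty \<Rightarrow> ('a sv \<times> 'b sv) set" where
  "LR f Q Q' Bo = {(Base q, Base q') | q q'. (q, q') \<in> f}"
| "LR f Q Q' (Arr A B) = {(phi, psi). phi \<in> dom Q (Arr A B) \<and> psi \<in> dom Q' (Arr A B) \<and>
     (\<forall>x y. (x, y) \<in> LR f Q Q' A \<longrightarrow> (app phi x, app psi y) \<in> LR f Q Q' B)}"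

lemma LR_inv:
  assumes fQ: "finite Q" and fQ': "finite Q'" and ps: "psurj Q Q' f"
  shows "LR f Q Q' A \<subseteq> dom Q A \<times> dom Q' A \<and> single_valued (LR f Q Q' A)
     \<and> (\<forall>y \<in> dom Q' A. \<exists>x. (x, y) \<in> LR f Q Q' A)"
proof (induction A)
  case Bo
  from ps have f: "f \<subseteq> Q \<times> Q'" "single_valued f" "Range f = Q'" by (auto simp: psurj_def)
  have 1: "LR f Q Q' Bo \<subseteq> dom Q Bo \<times> dom Q' Bo" using f(1) by auto
  have 2: "single_valued (LR f Q Q' Bo)" using f(2) by (auto simp: single_valued_def)
  have 3: "\<forall>y \<in> dom Q' Bo. \<exists>x. (x, y) \<in> LR f Q Q' Bo" using f(3) by auto
  show ?case using 1 2 3 by blast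
next
  case (Arr A B)
  let ?R = "LR f Q Q'"
  have IA: "?R A \<subseteq> dom Q A \<times> dom Q' A" "single_valued (?R A)" "\<forall>y \<in> dom Q' A. \<exists>x. (x, y) \<in> ?R A"
    using Arr.IH(1) by auto
  have IB: "?R B \<subseteq> dom Q B \<times> dom Q' B" "single_valued (?R B)" "\<forall>y \<in> dom Q' B. \<exists>x. (x, y) \<in> ?R B"
    using Arr.IH(2) by auto
  have 1: "?R (Arr A B) \<subseteq> dom Q (Arr A B) \<times> dom Q' (Arr A B)" by auto
  have 2: "single_valued (?R (Arr A B))"
  proof (rule single_valuedI)
    fix phi psi1 psi2 assume a1: "(phi, psi1) \<in> ?R (Arr A B)" and a2: "(phi, psi2) \<in> ?R (Arr A B)"
    have "\<forall>y \<in> dom Q' A. app psi1 y = app psi2 y"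
    proof
      fix y assume "y \<in> dom Q' A"
      then obtain x where x: "(x, y) \<in> ?R A" using IA(3) by blast
      have "(app phi x, app psi1 y) \<in> ?R B" "(app phi x, app psi2 y) \<in> ?R B"
        using a1 a2 x by auto
      then show "app psi1 y = app psi2 y" using IB(2) by (auto simp: single_valued_def)
    qed
    moreover have "psi1 \<in> dom Q' (Arr A B)" "psi2 \<in> dom Q' (Arr A B)" using a1 a2 by auto
    ultimately show "psi1 = psi2" using app_ext by blast
  qed
  have 3: "\<forall>psi \<in> dom Q' (Arr A B). \<exists>phi. (phi, psi) \<in> ?R (Arr A B)"
  proof
    fix psi assume psi: "psi \<in> dom Q' (Arr A B)"
    have ex: "\<forall>x \<in> dom Q A. \<exists>z. z \<in> dom Q B \<and> (\<forall>y. (x, y) \<in> ?R A \<longrightarrow> (z, app psi y) \<in> ?R B)"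
    proof
      fix x assume x: "x \<in> dom Q A"
      show "\<exists>z. z \<in> dom Q B \<and> (\<forall>y. (x, y) \<in> ?R A \<longrightarrow> (z, app psi y) \<in> ?R B)"
      proof (cases "\<exists>y. (x, y) \<in> ?R A")
        case True
        then obtain y where y: "(x, y) \<in> ?R A" by blast
        then have "y \<in> dom Q' A" using IA(1) by auto
        then have "app psi y \<in> dom Q' B" using app_dom[OF psi] by blast
        then obtain z where z: "(z, app psi y) \<in> ?R B" using IB(3) by blast
        then have zd: "z \<in> dom Q B" using IB(1) by auto
        have "\<forall>y'. (x, y') \<in> ?R A \<longrightarrow> (z, app psi y') \<in> ?R B"
          using y z IA(2) by (auto simp: single_valued_def)
        then show ?thesis using zd by blast
      next
        case False
        have "dom Q B \<noteq> {}"
        proof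
          assume eB: "dom Q B = {}"
          then have "Q = {}" "emp B" using dom_empty[OF fQ] by auto
          then have "Q' = {}" using ps by (auto simp: psurj_def)
          have "\<not> emp A" using dom_empty[OF fQ] x \<open>Q = {}\<close> by auto
          then have "dom Q' A \<noteq> {}" "dom Q' B = {}"
            using dom_empty[OF fQ'] \<open>Q' = {}\<close> \<open>emp B\<close> by auto
          then have "dom Q' (Arr A B) = {}" using dom_empty[OF fQ', of "Arr A B"] \<open>Q' = {}\<close> \<open>emp B\<close> \<open>\<not> emp A\<close> by simp
          then show False using psi by (metis empty_iff)
        qed
        then show ?thesis using False by blast
      qed
    qed
    then obtain g where g: "\<forall>x \<in> dom Q A. g x \<in> dom Q B \<and> (\<forall>y. (x, y) \<in> ?R A \<longrightarrow> (g x, app psi y) \<in> ?R B)"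
      by metis
    define phi where "phi = Fn (Abs_fset ((\<lambda>x. (x, g x)) ` dom Q A))"
    have ph: "phi \<in> dom Q (Arr A B)" "\<forall>x \<in> dom Q A. app phi x = g x"
      using mk_fun[OF fQ, of A g B] g unfolding phi_def by auto
    have "(phi, psi) \<in> ?R (Arr A B)"
      using ph psi g IA(1) by (auto 0 3)
    then show "\<exists>phi. (phi, psi) \<in> ?R (Arr A B)" by blast
  qed
  show ?case using 1 2 3 by blast
qed

lemma fundamental:
  assumes fQ: "finite Q" and fQ': "finite Q'" and ps: "psurj Q Q' f"
    and ty: "has_ty G t T"
  shows "\<And>e e'. (\<forall>i < length G. (e ! i, e' ! i) \<in> LR f Q Q' (G ! i))
    \<Longrightarrow> (sem Q t e, sem Q' t e') \<in> LR f Q Q' T"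
  using ty
proof (induction rule: has_ty.induct)
  case (has_ty_Var i G) then show ?case by simp
next
  case (has_ty_App G s T U t)
  then show ?case by auto
next
  case (has_ty_Lam T G t U)
  have envs: "\<forall>i < length G. e ! i \<in> dom Q (G ! i) \<and> e' ! i \<in> dom Q' (G ! i)"
    using has_ty_Lam.prems LR_inv[OF fQ fQ' ps] by blast
  have d1: "sem Q (Lam T t) e \<in> dom Q (Arr T U)"
    using sem_dom[OF has_ty.has_ty_Lam[OF has_ty_Lam.hyps] fQ] envs by blast
  have d2: "sem Q' (Lam T t) e' \<in> dom Q' (Arr T U)"
    using sem_dom[OF has_ty.has_ty_Lam[OF has_ty_Lam.hyps] fQ'] envs by blast
  have "\<forall>x y. (x, y) \<in> LR f Q Q' T \<longrightarrow>
     (app (sem Q (Lam T t) e) x, app (sem Q' (Lam T t) e') y) \<in> LR f Q Q' U"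
  proof (intro allI impI)
    fix x y assume xy: "(x, y) \<in> LR f Q Q' T"
    then have x: "x \<in> dom Q T" and y: "y \<in> dom Q' T" using LR_inv[OF fQ fQ' ps] by auto
    have sx: "\<forall>x \<in> dom Q T. sem Q t (x # e) \<in> dom Q U"
    proof
      fix x assume "x \<in> dom Q T"
      then have "\<forall>i < length (T # G). (x # e) ! i \<in> dom Q ((T # G) ! i)"
        using envs by (auto simp: nth_Cons split: nat.split)
      then show "sem Q t (x # e) \<in> dom Q U" using sem_dom[OF has_ty_Lam.hyps fQ] by blast
    qed
    have sy: "\<forall>x \<in> dom Q' T. sem Q' t (x # e') \<in> dom Q' U"
    proof
      fix x assume "x \<in> dom Q' T"
      then have "\<forall>i < length (T # G). (x # e') ! i \<in> dom Q' ((T # G) ! i)"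
        using envs by (auto simp: nth_Cons split: nat.split)
      then show "sem Q' t (x # e') \<in> dom Q' U" using sem_dom[OF has_ty_Lam.hyps fQ'] by blast
    qed
    have a1: "app (sem Q (Lam T t) e) x = sem Q t (x # e)"
      using mk_fun[OF fQ sx] x by simp
    have a2: "app (sem Q' (Lam T t) e') y = sem Q' t (y # e')"
      using mk_fun[OF fQ' sy] y by simp
    have "\<forall>i < length (T # G). ((x # e) ! i, (y # e') ! i) \<in> LR f Q Q' ((T # G) ! i)"
      using has_ty_Lam.prems xy by (auto simp: nth_Cons split: nat.split)
    then show "(app (sem Q (Lam T t) e) x, app (sem Q' (Lam T t) e') y) \<in> LR f Q Q' U"
      using has_ty_Lam.IH a1 a2 by simp
  qed
  then show ?case using d1 d2 by simp
qed



lemma Terms_rep: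
  assumes "C \<in> Terms A"
  shows "(SOME t. t \<in> C) \<in> C \<and> C \<subseteq> LamRaw A"
proof -
  from assms obtain a where a: "a \<in> LamRaw A" "C = conv A `` {a}"
    unfolding Terms_def by (auto elim: quotientE)
  have "(a, a) \<in> conv A" using a(1) unfolding conv_def by auto
  then have "a \<in> C" using a(2) by auto
  then have "(SOME t. t \<in> C) \<in> C" by (rule someI)
  moreover have "C \<subseteq> LamRaw A" using a(2) unfolding conv_def by auto
  ultimately show ?thesis by blast
qed

lemma interp_LR:
  assumes "finite Q" "finite Q'" "psurj Q Q' f" "C \<in> Terms A"
  shows "(interp Q C, interp Q' C) \<in> LR f Q Q' A"
proof -
  have "has_ty [] (SOME t. t \<in> C) A" using Terms_rep[OF assms(4)] unfolding LamRaw_def by auto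
  from fundamental[OF assms(1-3) this] show ?thesis unfolding interp_def by simp
qed

lemma RegQ_mono:
  assumes fQ: "finite Q" and fQ': "finite Q'" and ps: "psurj Q Q' f"
  shows "RegQ Q' A \<subseteq> RegQ Q A"
proof
  fix X assume "X \<in> RegQ Q' A"
  then obtain F' where F': "F' \<subseteq> dom Q' A" "X = {C \<in> Terms A. interp Q' C \<in> F'}"
    unfolding RegQ_def by blast
  define F where "F = {x \<in> dom Q A. \<exists>y \<in> F'. (x, y) \<in> LR f Q Q' A}"
  have inv: "LR f Q Q' A \<subseteq> dom Q A \<times> dom Q' A" "single_valued (LR f Q Q' A)"
    using LR_inv[OF fQ fQ' ps] by auto
  have "X = {C \<in> Terms A. interp Q C \<in> F}"
  proof (intro set_eqI iffI)
    fix C assume "C \<in> X"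
    then have C: "C \<in> Terms A" "interp Q' C \<in> F'" using F' by auto
    have "(interp Q C, interp Q' C) \<in> LR f Q Q' A" by (rule interp_LR[OF fQ fQ' ps C(1)])
    then show "C \<in> {C \<in> Terms A. interp Q C \<in> F}" using C inv unfolding F_def by auto
  next
    fix C assume "C \<in> {C \<in> Terms A. interp Q C \<in> F}"
    then have C: "C \<in> Terms A" "interp Q C \<in> F" by auto
    then obtain y where y: "y \<in> F'" "(interp Q C, y) \<in> LR f Q Q' A" unfolding F_def by auto
    have "(interp Q C, interp Q' C) \<in> LR f Q Q' A" by (rule interp_LR[OF fQ fQ' ps C(1)])
    then have "y = interp Q' C" using y inv(2) by (auto simp: single_valued_def)
    then show "C \<in> X" using F' C y by auto
  qed
  moreover have "F \<subseteq> dom Q A" unfolding F_def by auto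
  ultimately show "X \<in> RegQ Q A" unfolding RegQ_def by blast
qed

lemma interp_dom: "finite Q \<Longrightarrow> C \<in> Terms A \<Longrightarrow> interp Q C \<in> dom Q A"
proof -
  assume fQ: "finite Q" and C: "C \<in> Terms A"
  have "has_ty [] (SOME t. t \<in> C) A" using Terms_rep[OF C] unfolding LamRaw_def by auto
  from sem_dom[OF this fQ] show ?thesis unfolding interp_def by simp
qed

lemma RegQ_subalg:
  assumes fQ: "finite Q"
  shows "bool_subalg (Terms A) (RegQ Q A) \<and> (\<forall>X \<in> RegQ Q A. \<forall>Y \<in> RegQ Q A. X \<inter> Y \<in> RegQ Q A)"
proof -
  have 0: "{} \<in> RegQ Q A" unfolding RegQ_def by (rule CollectI, rule exI[of _ "{}"]) auto
  have P: "RegQ Q A \<subseteq> Pow (Terms A)" unfolding RegQ_def by auto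
  have C: "\<forall>X \<in> RegQ Q A. Terms A - X \<in> RegQ Q A"
  proof
    fix X assume "X \<in> RegQ Q A"
    then obtain F where F: "F \<subseteq> dom Q A" "X = {C \<in> Terms A. interp Q C \<in> F}"
      unfolding RegQ_def by blast
    have "Terms A - X = {C \<in> Terms A. interp Q C \<in> dom Q A - F}"
      using F interp_dom[OF fQ] by auto
    then show "Terms A - X \<in> RegQ Q A" unfolding RegQ_def by blast
  qed
  have U: "\<forall>X \<in> RegQ Q A. \<forall>Y \<in> RegQ Q A. X \<union> Y \<in> RegQ Q A \<and> X \<inter> Y \<in> RegQ Q A"
  proof (intro ballI)
    fix X Y assume "X \<in> RegQ Q A" "Y \<in> RegQ Q A"
    then obtain F G where F: "F \<subseteq> dom Q A" "X = {C \<in> Terms A. interp Q C \<in> F}"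
      and G: "G \<subseteq> dom Q A" "Y = {C \<in> Terms A. interp Q C \<in> G}"
      unfolding RegQ_def by blast
    have "X \<union> Y = {C \<in> Terms A. interp Q C \<in> F \<union> G}" "X \<inter> Y = {C \<in> Terms A. interp Q C \<in> F \<inter> G}"
      using F G by auto
    moreover have "F \<union> G \<subseteq> dom Q A" "F \<inter> G \<subseteq> dom Q A" using F G by auto
    ultimately show "X \<union> Y \<in> RegQ Q A \<and> X \<inter> Y \<in> RegQ Q A" unfolding RegQ_def by blast
  qed
  show ?thesis using 0 P C U unfolding bool_subalg_def by blast
qed

lemma psurj_Id: "Q1 \<subseteq> Q \<Longrightarrow> psurj Q Q1 (Id_on Q1)"
  unfolding psurj_def by (auto simp: single_valued_def)

lemma RegQ_Un1:
  fixes Q1 Q2 :: "nat set"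
  assumes "finite Q1" "finite Q2"
  shows "RegQ Q1 A \<subseteq> RegQ (Q1 \<union> Q2) A" "RegQ Q2 A \<subseteq> RegQ (Q1 \<union> Q2) A"
  using RegQ_mono[OF _ _ psurj_Id, of "Q1 \<union> Q2" Q1 A] RegQ_mono[OF _ _ psurj_Id, of "Q1 \<union> Q2" Q2 A]
    assms by auto

lemma Reg_iff: "X \<in> Reg A \<longleftrightarrow> (\<exists>Q :: nat set. finite Q \<and> X \<in> RegQ Q A)"
  unfolding Reg_def by auto

theorem theoremA:
  fixes A :: ty
  shows
  "(\<forall>(Q :: 'a set) (Q' :: 'b set) f. finite Q \<and> finite Q' \<and> psurj Q Q' f
        \<longrightarrow> RegQ Q' A \<subseteq> RegQ Q A)
   \<and> (\<forall>Q :: nat set. finite Q \<longrightarrow> bool_subalg (Terms A) (RegQ Q A))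
   \<and> (\<forall>(Q1 :: nat set) (Q2 :: nat set). finite Q1 \<and> finite Q2 \<longrightarrow>
        (\<exists>Q :: nat set. finite Q \<and> (\<exists>f. psurj Q Q1 f) \<and> (\<exists>f. psurj Q Q2 f)))
   \<and> bool_subalg (Terms A) (Reg A)
   \<and> (\<forall>Q :: nat set. finite Q \<longrightarrow> RegQ Q A \<subseteq> Reg A)
   \<and> (\<forall>g :: nat set \<Rightarrow> tm set set \<Rightarrow> 'c::boolean_algebra.
        (\<forall>Q. finite Q \<longrightarrow> ba_hom_on (Terms A) (RegQ Q A) (g Q))
        \<and> (\<forall>Q Q' f. finite Q \<and> finite Q' \<and> psurj Q Q' f
              \<longrightarrow> (\<forall>X \<in> RegQ Q' A. g Q X = g Q' X))
      \<longrightarrow> (\<exists>h. ba_hom_on (Terms A) (Reg A) h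
              \<and> (\<forall>Q. finite Q \<longrightarrow> (\<forall>X \<in> RegQ Q A. h X = g Q X))
              \<and> (\<forall>h'. ba_hom_on (Terms A) (Reg A) h'
                     \<and> (\<forall>Q. finite Q \<longrightarrow> (\<forall>X \<in> RegQ Q A. h' X = g Q X))
                   \<longrightarrow> (\<forall>X \<in> Reg A. h' X = h X))))"
proof -
  let ?U = "Terms A"
  have P1: "\<forall>(Q :: 'a set) (Q' :: 'b set) f. finite Q \<and> finite Q' \<and> psurj Q Q' f
        \<longrightarrow> RegQ Q' A \<subseteq> RegQ Q A" using RegQ_mono by blast
  have P2: "\<forall>Q :: nat set. finite Q \<longrightarrow> bool_subalg (Terms A) (RegQ Q A)"
    using RegQ_subalg by blast
  have P3: "\<forall>(Q1 :: nat set) (Q2 :: nat set). finite Q1 \<and> finite Q2 \<longrightarrow>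
        (\<exists>Q :: nat set. finite Q \<and> (\<exists>f. psurj Q Q1 f) \<and> (\<exists>f. psurj Q Q2 f))"
  proof (intro allI impI)
    fix Q1 Q2 :: "nat set" assume "finite Q1 \<and> finite Q2"
    then show "\<exists>Q :: nat set. finite Q \<and> (\<exists>f. psurj Q Q1 f) \<and> (\<exists>f. psurj Q Q2 f)"
    proof (intro exI conjI)
      show "finite (Q1 \<union> Q2)" using \<open>finite Q1 \<and> finite Q2\<close> by simp
      show "psurj (Q1 \<union> Q2) Q1 (Id_on Q1)" by (rule psurj_Id) simp
      show "psurj (Q1 \<union> Q2) Q2 (Id_on Q2)" by (rule psurj_Id) simp
    qed
  qed
  have regI: "\<And>Q X. finite (Q :: nat set) \<Longrightarrow> X \<in> RegQ Q A \<Longrightarrow> X \<in> Reg A"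
    by (rule Reg_iff[THEN iffD2], blast)
  have regE: "\<And>X. X \<in> Reg A \<Longrightarrow> \<exists>Q :: nat set. finite Q \<and> X \<in> RegQ Q A"
    by (rule Reg_iff[THEN iffD1])
  have two: "\<And>X Y. X \<in> Reg A \<Longrightarrow> Y \<in> Reg A \<Longrightarrow> \<exists>Q :: nat set. finite Q \<and> X \<in> RegQ Q A \<and> Y \<in> RegQ Q A"
  proof -
    fix X Y assume XY: "X \<in> Reg A" "Y \<in> Reg A"
    obtain Q1 :: "nat set" where "finite Q1" "X \<in> RegQ Q1 A" using regE[OF XY(1)] by blast
    obtain Q2 :: "nat set" where "finite Q2" "Y \<in> RegQ Q2 A" using regE[OF XY(2)] by blast
    from \<open>finite Q1\<close> \<open>X \<in> RegQ Q1 A\<close> \<open>finite Q2\<close> \<open>Y \<in> RegQ Q2 A\<close>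
    show "\<exists>Q :: nat set. finite Q \<and> X \<in> RegQ Q A \<and> Y \<in> RegQ Q A"
    proof (intro exI[of _ "Q1 \<union> Q2"] conjI)
      show "finite (Q1 \<union> Q2)" using \<open>finite Q1\<close> \<open>finite Q2\<close> by simp
      show "X \<in> RegQ (Q1 \<union> Q2) A" using RegQ_Un1(1)[OF \<open>finite Q1\<close> \<open>finite Q2\<close>, of A] \<open>X \<in> RegQ Q1 A\<close> by (rule subsetD)
      show "Y \<in> RegQ (Q1 \<union> Q2) A" using RegQ_Un1(2)[OF \<open>finite Q1\<close> \<open>finite Q2\<close>, of A] \<open>Y \<in> RegQ Q2 A\<close> by (rule subsetD)
    qed
  qed
  have P4: "bool_subalg (Terms A) (Reg A)"
    unfolding bool_subalg_def
  proof (intro conjI ballI)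
    show "Reg A \<subseteq> Pow (Terms A)"
    proof
      fix X assume "X \<in> Reg A"
      then obtain Q :: "nat set" where "finite Q" "X \<in> RegQ Q A" using regE[OF \<open>X \<in> Reg A\<close>] by blast
      then show "X \<in> Pow (Terms A)" unfolding RegQ_def by auto
    qed
    show "{} \<in> Reg A" using regI[of "{}"] RegQ_subalg[of "{} :: nat set" A]
      unfolding bool_subalg_def by blast
    fix X assume "X \<in> Reg A"
    then obtain Q :: "nat set" where Q: "finite Q" "X \<in> RegQ Q A" using regE[OF \<open>X \<in> Reg A\<close>] by blast
    then have "Terms A - X \<in> RegQ Q A" using RegQ_subalg[OF Q(1), of A] unfolding bool_subalg_def by blast
    then show "Terms A - X \<in> Reg A" using regI Q by blast
  next
    fix X Y assume "X \<in> Reg A" "Y \<in> Reg A"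
    then obtain Q :: "nat set" where Q: "finite Q" "X \<in> RegQ Q A" "Y \<in> RegQ Q A" using two by blast
    then have "X \<union> Y \<in> RegQ Q A" using RegQ_subalg[OF Q(1), of A] unfolding bool_subalg_def by blast
    then show "X \<union> Y \<in> Reg A" using regI Q by blast
  qed
  have P5: "\<forall>Q :: nat set. finite Q \<longrightarrow> RegQ Q A \<subseteq> Reg A" using regI by blast
  have P6: "\<forall>g :: nat set \<Rightarrow> tm set set \<Rightarrow> 'c::boolean_algebra.
        (\<forall>Q. finite Q \<longrightarrow> ba_hom_on (Terms A) (RegQ Q A) (g Q))
        \<and> (\<forall>Q Q' f. finite Q \<and> finite Q' \<and> psurj Q Q' f
              \<longrightarrow> (\<forall>X \<in> RegQ Q' A. g Q X = g Q' X))
      \<longrightarrow> (\<exists>h. ba_hom_on (Terms A) (Reg A) h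
              \<and> (\<forall>Q. finite Q \<longrightarrow> (\<forall>X \<in> RegQ Q A. h X = g Q X))
              \<and> (\<forall>h'. ba_hom_on (Terms A) (Reg A) h'
                     \<and> (\<forall>Q. finite Q \<longrightarrow> (\<forall>X \<in> RegQ Q A. h' X = g Q X))
                   \<longrightarrow> (\<forall>X \<in> Reg A. h' X = h X)))"
  proof (intro allI impI)
    fix g :: "nat set \<Rightarrow> tm set set \<Rightarrow> 'c::boolean_algebra"
    assume gh: "(\<forall>Q. finite Q \<longrightarrow> ba_hom_on (Terms A) (RegQ Q A) (g Q))
        \<and> (\<forall>Q Q' f. finite Q \<and> finite Q' \<and> psurj Q Q' f
              \<longrightarrow> (\<forall>X \<in> RegQ Q' A. g Q X = g Q' X))"
    have hom: "\<And>Q. finite Q \<Longrightarrow> ba_hom_on (Terms A) (RegQ Q A) (g Q)" using gh by blast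
    have comp: "\<And>Q1 Q2 X. finite Q1 \<Longrightarrow> finite Q2 \<Longrightarrow> X \<in> RegQ Q1 A \<Longrightarrow> X \<in> RegQ Q2 A
        \<Longrightarrow> g Q1 X = g Q2 X"
    proof -
      fix Q1 Q2 :: "nat set" and X assume a: "finite Q1" "finite Q2" "X \<in> RegQ Q1 A" "X \<in> RegQ Q2 A"
      have c2: "\<And>Q Q' f X. finite Q \<Longrightarrow> finite Q' \<Longrightarrow> psurj Q Q' f \<Longrightarrow> X \<in> RegQ Q' A \<Longrightarrow> g Q X = g Q' X"
        using gh by blast
      have f: "finite (Q1 \<union> Q2)" using a by simp
      have "g (Q1 \<union> Q2) X = g Q1 X" by (rule c2[OF f a(1) psurj_Id a(3)]) simp
      moreover have "g (Q1 \<union> Q2) X = g Q2 X" by (rule c2[OF f a(2) psurj_Id a(4)]) simp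
      ultimately show "g Q1 X = g Q2 X" by simp
    qed
    define h where "h X = g (SOME Q :: nat set. finite Q \<and> X \<in> RegQ Q A) X" for X
    have hg: "\<And>Q X. finite Q \<Longrightarrow> X \<in> RegQ Q A \<Longrightarrow> h X = g Q X"
    proof -
      fix Q X assume a: "finite (Q :: nat set)" "X \<in> RegQ Q A"
      then have "\<exists>Q :: nat set. finite Q \<and> X \<in> RegQ Q A" by blast
      then have "finite (SOME Q :: nat set. finite Q \<and> X \<in> RegQ Q A) \<and> X \<in> RegQ (SOME Q :: nat set. finite Q \<and> X \<in> RegQ Q A) A"
        by (rule someI_ex)
      then show "h X = g Q X" unfolding h_def using comp a by blast
    qed
    have e0: "{} \<in> RegQ ({} :: nat set) A" "Terms A \<in> RegQ ({} :: nat set) A"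
      using RegQ_subalg[of "{} :: nat set" A] unfolding bool_subalg_def by auto
    have hh: "ba_hom_on (Terms A) (Reg A) h"
      unfolding ba_hom_on_def
    proof (intro conjI ballI)
      show "h {} = bot" using hg[OF _ e0(1)] hom[of "{}"] unfolding ba_hom_on_def by simp
      show "h (Terms A) = top" using hg[OF _ e0(2)] hom[of "{}"] unfolding ba_hom_on_def by simp
    next
      fix X assume "X \<in> Reg A"
      then obtain Q :: "nat set" where Q: "finite Q" "X \<in> RegQ Q A" using regE[OF \<open>X \<in> Reg A\<close>] by blast
      then have c: "Terms A - X \<in> RegQ Q A" using RegQ_subalg[OF Q(1), of A] unfolding bool_subalg_def by blast
      have "g Q (Terms A - X) = - g Q X" using hom[OF Q(1)] Q(2) unfolding ba_hom_on_def by blast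
      then show "h (Terms A - X) = - h X" using hg[OF Q(1) c] hg[OF Q] by simp
    next
      fix X Y assume "X \<in> Reg A" "Y \<in> Reg A"
      then obtain Q :: "nat set" where Q: "finite Q" "X \<in> RegQ Q A" "Y \<in> RegQ Q A" using two by blast
      have u: "X \<union> Y \<in> RegQ Q A" "X \<inter> Y \<in> RegQ Q A" using RegQ_subalg[OF Q(1), of A] Q unfolding bool_subalg_def by blast+
      have "g Q (X \<union> Y) = sup (g Q X) (g Q Y) \<and> g Q (X \<inter> Y) = inf (g Q X) (g Q Y)"
        using hom[OF Q(1)] Q(2,3) unfolding ba_hom_on_def by blast
      then show "h (X \<union> Y) = sup (h X) (h Y)" "h (X \<inter> Y) = inf (h X) (h Y)"
        using hg[OF Q(1) u(1)] hg[OF Q(1) u(2)] hg[OF Q(1,2)] hg[OF Q(1,3)] by simp_all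
    qed
    show "\<exists>h. ba_hom_on (Terms A) (Reg A) h
              \<and> (\<forall>Q. finite Q \<longrightarrow> (\<forall>X \<in> RegQ Q A. h X = g Q X))
              \<and> (\<forall>h'. ba_hom_on (Terms A) (Reg A) h'
                     \<and> (\<forall>Q. finite Q \<longrightarrow> (\<forall>X \<in> RegQ Q A. h' X = g Q X))
                   \<longrightarrow> (\<forall>X \<in> Reg A. h' X = h X))"
    proof (intro exI[of _ h] conjI allI impI ballI)
      show "ba_hom_on (Terms A) (Reg A) h" by (rule hh)
    next
      fix Q X assume "finite (Q :: nat set)" "X \<in> RegQ Q A" then show "h X = g Q X" by (rule hg)
    next
      fix h' X assume a: "ba_hom_on (Terms A) (Reg A) h' \<and> (\<forall>Q. finite Q \<longrightarrow> (\<forall>X \<in> RegQ Q A. h' X = g Q X))"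
        and X: "X \<in> Reg A"
      then obtain Q :: "nat set" where Q: "finite Q" "X \<in> RegQ Q A" using regE[OF \<open>X \<in> Reg A\<close>] by blast
      then have "h' X = g Q X" using a by blast
      then show "h' X = h X" using hg[OF Q] by simp
    qed
  qed
  show ?thesis by (intro conjI P1 P2 P3 P4 P5 P6)
qed


end
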